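(* Let $k=4$, $r\ge 2$, $d=2^r$, $n\ge d$ and $i=n-d$. Then in $\mathbb{F}_2[w_2,w_3,w_4]$, \[ \beta_3^{i-1}q_n+w_4\beta_3^{i-2}q_{n-1}+\big(w_2\beta_3^{i-1}+w_4^2\beta_3^{i-3}\big)q_{n-2}+\beta_3^iq_{n-3}=0, \] a homogeneous relation of degree $(d-3)+4i$, where $\beta_3^0=1$, $\beta_3^m=0$ for $m<0$, and $\beta_3^{m+1}=w_3\beta_3^m+w_2w_4\beta_3^{m-1}+w_4^3\beta_3^{m-3}$ for $m\ge 0$.
   Context: In $\mathbb{F}_2[w_2,w_3,w_4]$ ($\deg w_i=i$), $q_0=1$, $q_m=0$ for $m<0$, and $q_m=w_2q_{m-2}+w_3q_{m-3}+w_4q_{m-4}$ for $m\ge1$. *)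

theory Defs
  imports "HOL-Library.Z2" "HOL-Computational_Algebra.Polynomial"
begin

text \<open>The ring F_2[w2,w3,w4], realised as iterated univariate polynomials
  ((F_2[w2])[w3])[w4]; the type bit is the field with two elements.\<close>

type_synonym R = "bit poly poly poly"

definition w2 :: R where "w2 = [:[:[:0, 1:]:]:]"
definition w3 :: R where "w3 = [:[:0, 1:]:]"
definition w4 :: R where "w4 = [:0, 1:]"

fun qn :: "nat \<Rightarrow> R" where
  "qn m = (if m = 0 then 1 else
     (if m \<ge> 2 then w2 * qn (m - 2) else 0) +
     (if m \<ge> 3 then w3 * qn (m - 3) else 0) +
     (if m \<ge> 4 then w4 * qn (m - 4) else 0))"

definition q :: "int \<Rightarrow> R" where
  "q m = (if m < 0 then 0 else qn (nat m))"

fun betan :: "nat \<Rightarrow> R" where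
  "betan 0 = 1"
| "betan (Suc m) = w3 * betan m +
     (if m \<ge> 1 then w2 * w4 * betan (m - 1) else 0) +
     (if m \<ge> 3 then w4 ^ 3 * betan (m - 3) else 0)"

definition beta3 :: "int \<Rightarrow> R" where
  "beta3 m = (if m < 0 then 0 else betan (nat m))"

end

theory Submission
  imports Defs
begin

lemma two_R: "(2::R) = 0"
  by (simp add: numeral_poly)

lemma char2: "(a::R) + a = 0"
proof -
  have "a + a = 2 * a" by simp
  then show ?thesis by (simp add: two_R)
qed

lemma sq_add: "((a::R) + b)^2 = a^2 + b^2"
proof -
  have "(a+b)^2 = a^2 + b^2 + 2*(a*b)" by (simp add: power2_eq_square algebra_simps)
  then show ?thesis by (simp add: two_R)
qed

lemma c2: "x = y + 2*z \<Longrightarrow> x = (y::R)" by (simp add: two_R)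

lemma q_neg: "m < 0 \<Longrightarrow> q m = 0" by (simp add: q_def)
lemma q_0: "q 0 = 1" by (simp add: q_def)
lemma q_rec: "m \<ge> 1 \<Longrightarrow> q m = w2 * q (m-2) + w3 * q (m-3) + w4 * q (m-4)"
proof -
  assume m: "m \<ge> 1"
  have "q m = qn (nat m)" using m by (simp add: q_def)
  also have "\<dots> = (if nat m \<ge> 2 then w2 * qn (nat m - 2) else 0) +
     (if nat m \<ge> 3 then w3 * qn (nat m - 3) else 0) +
     (if nat m \<ge> 4 then w4 * qn (nat m - 4) else 0)"
    using m by (subst qn.simps) simp
  also have "\<dots> = w2 * q (m-2) + w3 * q (m-3) + w4 * q (m-4)"
    using m by (auto simp: q_def nat_diff_distrib)
  finally show ?thesis .
qed

lemma b_neg: "m < 0 \<Longrightarrow> beta3 m = 0" by (simp add: beta3_def)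
lemma b_0: "beta3 0 = 1" by (simp add: beta3_def)
lemma b_rec: "m \<ge> 0 \<Longrightarrow> beta3 (m+1) = w3 * beta3 m + w2 * w4 * beta3 (m-1) + w4^3 * beta3 (m-3)"
proof -
  assume m: "m \<ge> 0"
  have "beta3 (m+1) = betan (Suc (nat m))" using m by (simp add: beta3_def nat_add_distrib)
  also have "\<dots> = w3 * betan (nat m) +
     (if nat m \<ge> 1 then w2 * w4 * betan (nat m - 1) else 0) +
     (if nat m \<ge> 3 then w4 ^ 3 * betan (nat m - 3) else 0)" by simp
  also have "\<dots> = w3 * beta3 m + w2 * w4 * beta3 (m-1) + w4^3 * beta3 (m-3)"
    using m by (auto simp: beta3_def nat_diff_distrib)
  finally show ?thesis .
qed

lemma dbl: "\<forall>k. (2*k \<le> int N \<longrightarrow> q(2*k) = q k^2 + w2*q(k-1)^2 + w4*q(k-2)^2)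
   \<and> (2*k+1 \<le> int N \<longrightarrow> q(2*k+1) = w3*q(k-1)^2)"
proof (induction N)
  case 0
  show ?case
  proof
    fix k :: int
    show "(2*k \<le> int 0 \<longrightarrow> q(2*k) = q k^2 + w2*q(k-1)^2 + w4*q(k-2)^2)
      \<and> (2*k+1 \<le> int 0 \<longrightarrow> q(2*k+1) = w3*q(k-1)^2)"
    proof (cases "k < 0")
      case True then show ?thesis by (simp add: q_neg)
    next
      case False then show ?thesis by (auto simp: q_neg q_0)
    qed
  qed
next
  case (Suc N)
  show ?case
  proof
    fix k :: int
    have A: "q(2*k) = q k^2 + w2*q(k-1)^2 + w4*q(k-2)^2" if k: "2*k \<le> int (Suc N)"
    proof (cases "2*k \<le> int N")
      case True then show ?thesis using Suc.IH by blast
    next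
      case False
      then have k1: "k \<ge> 1" and kN: "2*k = int N + 1" using k by auto
      have h1: "q(2*k-2) = q (k-1)^2 + w2*q(k-2)^2 + w4*q(k-3)^2"
        using Suc.IH[rule_format, of "k-1"] kN by (auto simp: algebra_simps)
      have h2: "q(2*k-3) = w3*q(k-3)^2"
        using Suc.IH[rule_format, of "k-2"] kN by (auto simp: algebra_simps)
      have h3: "q(2*k-4) = q (k-2)^2 + w2*q(k-3)^2 + w4*q(k-4)^2"
        using Suc.IH[rule_format, of "k-2"] kN by (auto simp: algebra_simps)
      have r1: "q(2*k) = w2 * q (2*k-2) + w3 * q (2*k-3) + w4 * q (2*k-4)"
        using q_rec[of "2*k"] k1 by simp
      have r2: "q k = w2 * q (k-2) + w3 * q (k-3) + w4 * q (k-4)"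
        using q_rec[of "k"] k1 by simp
      have r3: "q k^2 = w2^2 * q (k-2)^2 + w3^2 * q (k-3)^2 + w4^2 * q (k-4)^2"
        unfolding r2 sq_add power_mult_distrib ..
      show ?thesis unfolding r1 h1 h2 h3 r3 by (rule c2[where z="w2*w4*q(k-3)^2"]) algebra
    qed
    have B: "q(2*k+1) = w3*q(k-1)^2" if k: "2*k+1 \<le> int (Suc N)"
    proof (cases "2*k+1 \<le> int N")
      case True then show ?thesis using Suc.IH by blast
    next
      case False
      then have k1: "k \<ge> 0" and kN: "2*k+1 = int N + 1" using k by auto
      have h1: "q(2*k-1) = w3*q(k-2)^2"
        using Suc.IH[rule_format, of "k-1"] kN by (auto simp: algebra_simps)
      have h2: "q(2*k-2) = q (k-1)^2 + w2*q(k-2)^2 + w4*q(k-3)^2"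
        using Suc.IH[rule_format, of "k-1"] kN by (auto simp: algebra_simps)
      have h3: "q(2*k-3) = w3*q(k-3)^2"
        using Suc.IH[rule_format, of "k-2"] kN by (auto simp: algebra_simps)
      have r1: "q(2*k+1) = w2 * q (2*k-1) + w3 * q (2*k-2) + w4 * q (2*k-3)"
        using q_rec[of "2*k+1"] k1 by simp
      show ?thesis unfolding r1 h1 h2 h3 by (rule c2[where z="w2*w3*q(k-2)^2 + w3*w4*q(k-3)^2"]) algebra
    qed
    show "(2*k \<le> int (Suc N) \<longrightarrow> q(2*k) = q k^2 + w2*q(k-1)^2 + w4*q(k-2)^2)
      \<and> (2*k+1 \<le> int (Suc N) \<longrightarrow> q(2*k+1) = w3*q(k-1)^2)" using A B by blast
  qed
qed

lemma q_pow: "r \<ge> 2 \<Longrightarrow> q(2^r - 3) = 0"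
proof (induction r rule: dec_induct)
  case base
  show ?case using q_rec[of 1] by (simp add: q_neg)
next
  case (step r)
  have e: "(2::int)^(Suc r) - 3 = 2*(2^r - 2) + 1" by simp
  have "q(2*(2^r - 2) + 1) = w3 * q(2^r - 2 - 1)^2"
    using dbl[of "nat (2^(Suc r))", rule_format, of "2^r - 2"] by simp
  also have "(2::int)^r - 2 - 1 = 2^r - 3" by simp
  finally show ?case using e step.IH by simp
qed

lemma Elem:
  fixes d :: int
  assumes d: "d \<ge> 0"
  shows "beta3 (int i - 1) * q (d + int i) + w4 * beta3 (int i - 2) * q (d + int i - 1)
         + (w2 * beta3 (int i - 1) + w4 ^ 2 * beta3 (int i - 3)) * q (d + int i - 2)
         + beta3 (int i) * q (d + int i - 3) = w4^i * q (d - 3)"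
proof (induction i)
  case 0
  then show ?case by (simp add: b_neg b_0)
next
  case (Suc i)
  define j where "j = int i"
  have j0: "j \<ge> 0" unfolding j_def by simp
  have eq: "int (Suc i) = j + 1" unfolding j_def by simp
  have rb: "beta3 (j+1) = w3 * beta3 j + w2 * w4 * beta3 (j-1) + w4^3 * beta3 (j-3)"
    using b_rec[OF j0] .
  have rq: "q (d + (j+1)) = w2 * q (d+j-1) + w3 * q (d+j-2) + w4 * q (d+j-3)"
    using q_rec[of "d+(j+1)"] d j0 by (simp add: algebra_simps)
  have IH: "beta3 (j - 1) * q (d + j) + w4 * beta3 (j - 2) * q (d + j - 1)
         + (w2 * beta3 (j - 1) + w4 ^ 2 * beta3 (j - 3)) * q (d + j - 2)
         + beta3 j * q (d + j - 3) = w4^i * q (d - 3)" using Suc.IH unfolding j_def .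
  have "beta3 (j+1 - 1) * q (d + (j+1)) + w4 * beta3 (j+1 - 2) * q (d + (j+1) - 1)
         + (w2 * beta3 (j+1 - 1) + w4 ^ 2 * beta3 (j+1 - 3)) * q (d + (j+1) - 2)
         + beta3 (j+1) * q (d + (j+1) - 3)
       = beta3 j * q (d + (j+1)) + w4 * beta3 (j - 1) * q (d + j)
         + (w2 * beta3 j + w4 ^ 2 * beta3 (j - 2)) * q (d + j - 1)
         + beta3 (j+1) * q (d + j - 2)" by (simp add: algebra_simps)
  also have "\<dots> = w4 * (beta3 (j - 1) * q (d + j) + w4 * beta3 (j - 2) * q (d + j - 1)
         + (w2 * beta3 (j - 1) + w4 ^ 2 * beta3 (j - 3)) * q (d + j - 2)
         + beta3 j * q (d + j - 3))"
    unfolding rb rq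
    by (rule c2[where z="w2 * beta3 j * q (d+j-1) + w3 * beta3 j * q (d+j-2)"]) algebra
  also have "\<dots> = w4^(Suc i) * q (d - 3)" unfolding IH by simp
  finally show ?case unfolding eq .
qed

theorem mainTheorem13:
  fixes r n :: nat and d i :: int
  assumes "r \<ge> 2" and "d = 2 ^ r" and "int n \<ge> d" and "i = int n - d"
  shows "beta3 (i - 1) * q (int n) + w4 * beta3 (i - 2) * q (int n - 1)
         + (w2 * beta3 (i - 1) + w4 ^ 2 * beta3 (i - 3)) * q (int n - 2)
         + beta3 i * q (int n - 3) = 0"
proof -
  have d0: "d \<ge> 0" using assms(2) by simp
  have ii: "i = int (nat i)" using assms by simp
  have n: "int n = d + int (nat i)" using assms by simp
  have "q (d - 3) = 0" using q_pow[OF assms(1)] assms(2) by simp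
  moreover have "i \<ge> 0" using assms by simp
  ultimately show ?thesis using Elem[OF d0, of "nat i"] unfolding n by simp
qed

end
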